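(* Let $A,B$ be Hermitian operators on $\mathbb{C}^2$ with $AB\neq BA$. Then the KD distribution of $(A,B)$ distinguishes all states: for density operators $\rho,\rho'$ on $\mathbb{C}^2$, $\rho=\rho'$ if and only if $K^{A,B}_\rho=K^{A,B}_{\rho'}$ as distributions on $\mathbb{R}^2$.
   Context: A density operator is a positive semidefinite trace-one operator. Kirkwood–Dirac (KD) distribution: for Hermitian operators $A_1,\dots,A_n$ on $\mathbb{C}^N$ and a density operator $\rho$, define the operator-valued tempered distribution $\#^{K}_{A_1,\dots,A_n}(x)=(2\pi)^{-n}\int_{\mathbb{R}^n} e^{-is_1A_1}\cdots e^{-is_nA_n}\,e^{i s\cdot x}\,d^ns$ (inverse Fourier transform in the distributional sense), and $K^{A_1,\dots,A_n}_\rho(x)=\mathrm{Tr}[\#^{K}_{A_1,\dots,A_n}(x)\,\rho]$. *)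

theory Defs
  imports "HOL-Analysis.Analysis"
begin

definition adjoint_mat :: "complex^'n^'n \<Rightarrow> complex^'n^'n" where
  "adjoint_mat M = (\<chi> i j. cnj (M $ j $ i))"

definition hermitian_mat :: "complex^'n^'n \<Rightarrow> bool" where
  "hermitian_mat M \<longleftrightarrow> adjoint_mat M = M"

definition psd_mat :: "complex^'n^'n \<Rightarrow> bool" where
  "psd_mat M \<longleftrightarrow> (\<forall>v::complex^'n.
     Im (\<Sum>i\<in>UNIV. cnj (v $ i) * (M *v v) $ i) = 0 \<and>
     0 \<le> Re (\<Sum>i\<in>UNIV. cnj (v $ i) * (M *v v) $ i))"

definition density_operator :: "complex^'n^'n \<Rightarrow> bool" where
  "density_operator \<rho> \<longleftrightarrow> psd_mat \<rho> \<and> trace \<rho> = 1"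

definition mat_scale :: "complex \<Rightarrow> complex^'n^'n \<Rightarrow> complex^'n^'n" where
  "mat_scale c M = (\<chi> i j. c * M $ i $ j)"

fun mat_pow :: "complex^'n^'n \<Rightarrow> nat \<Rightarrow> complex^'n^'n" where
  "mat_pow M 0 = mat 1"
| "mat_pow M (Suc k) = M ** mat_pow M k"

definition mat_exp :: "complex^'n^'n \<Rightarrow> complex^'n^'n" where
  "mat_exp M = (\<Sum>k. (1 / fact k) *\<^sub>R mat_pow M k)"

definition partial_deriv :: "'n \<Rightarrow> (real^'n \<Rightarrow> complex) \<Rightarrow> real^'n \<Rightarrow> complex" where
  "partial_deriv i f x = vector_derivative (\<lambda>t. f (x + t *\<^sub>R axis i 1)) (at 0)"

fun Ck_fun :: "nat \<Rightarrow> (real^'n \<Rightarrow> complex) \<Rightarrow> bool" where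
  "Ck_fun 0 f \<longleftrightarrow> continuous_on UNIV f"
| "Ck_fun (Suc k) f \<longleftrightarrow> continuous_on UNIV f \<and>
     (\<forall>i x. (\<lambda>t. f (x + t *\<^sub>R axis i 1)) differentiable (at 0)) \<and>
     (\<forall>i. Ck_fun k (partial_deriv i f))"

definition smooth_fun :: "(real^'n \<Rightarrow> complex) \<Rightarrow> bool" where
  "smooth_fun f \<longleftrightarrow> (\<forall>k. Ck_fun k f)"

definition test_function :: "(real^'n \<Rightarrow> complex) \<Rightarrow> bool" where
  "test_function \<phi> \<longleftrightarrow> smooth_fun \<phi> \<and> (\<exists>R. \<forall>x. R < norm x \<longrightarrow> \<phi> x = 0)"

definition KD_char :: "complex^'n^'n \<Rightarrow> complex^'n^'n \<Rightarrow> complex^'n^'n \<Rightarrow> real^2 \<Rightarrow> complex" where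
  "KD_char A B \<rho> s = trace (mat_exp (mat_scale (- \<i> * complex_of_real (s $ 1)) A)
                        ** mat_exp (mat_scale (- \<i> * complex_of_real (s $ 2)) B) ** \<rho>)"

text \<open>The KD distribution K^{A,B}_\<rho>, as a distribution on R^2: its pairing with a test
  function \<phi> is that of the inverse Fourier transform of KD_char, i.e.
  (2\<pi>)^{-2} \<integral> KD_char(s) (\<integral> e^{i s\<cdot>x} \<phi>(x) dx) ds.\<close>
definition KD_dist :: "complex^'n^'n \<Rightarrow> complex^'n^'n \<Rightarrow> complex^'n^'n \<Rightarrow> (real^2 \<Rightarrow> complex) \<Rightarrow> complex" where
  "KD_dist A B \<rho> \<phi> = complex_of_real (1 / (2 * pi)^2) *
     (LINT s|lborel. KD_char A B \<rho> s *
        (LINT x|lborel. exp (\<i> * complex_of_real (s \<bullet> x)) * \<phi> x))"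

end

theory Submission
  imports Defs "HOL-Computational_Algebra.Polynomial" "HOL-Probability.Characteristic_Functions" "HOL-Probability.Sinc_Integral"
begin

definition mk :: "complex \<Rightarrow> complex \<Rightarrow> complex \<Rightarrow> complex \<Rightarrow> complex^2^2" where
  "mk a b c d = (\<chi> i j. if i = 1 then (if j = 1 then a else b) else (if j = 1 then c else d))"

lemma mk_nth [simp]: "mk a b c d $ 1 $ 1 = a" "mk a b c d $ 1 $ 2 = b" "mk a b c d $ 2 $ 1 = c" "mk a b c d $ 2 $ 2 = d"
  by (simp_all add: mk_def)

lemma mk_eta: "M = mk (M$1$1) (M$1$2) (M$2$1) (M$2$2)"
  unfolding vec_eq_iff forall_2 by simp

lemma mk_eq_iff: "mk a b c d = mk a' b' c' d' \<longleftrightarrow> a = a' \<and> b = b' \<and> c = c' \<and> d = d'"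
  by (metis mk_nth)

lemma mk_mult: "mk a b c d ** mk a' b' c' d' = mk (a*a'+b*c') (a*b'+b*d') (c*a'+d*c') (c*b'+d*d')"
  unfolding vec_eq_iff forall_2 by (simp add: matrix_matrix_mult_def sum_2)

lemma mk_add: "mk a b c d + mk a' b' c' d' = mk (a+a') (b+b') (c+c') (d+d')"
  unfolding vec_eq_iff forall_2 by simp

lemma mk_diff: "mk a b c d - mk a' b' c' d' = mk (a-a') (b-b') (c-c') (d-d')"
  unfolding vec_eq_iff forall_2 by simp

lemma mk_scale: "mat_scale x (mk a b c d) = mk (x*a) (x*b) (x*c) (x*d)"
  unfolding vec_eq_iff forall_2 by (simp add: mat_scale_def)

lemma mk_scaleR: "r *\<^sub>R (mk a b c d) = mk (r*\<^sub>Ra) (r*\<^sub>Rb) (r*\<^sub>Rc) (r*\<^sub>Rd)"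
  unfolding vec_eq_iff forall_2 by simp

lemma mk_one: "mat 1 = mk 1 0 0 1"
  unfolding vec_eq_iff forall_2 by (simp add: mat_def)

lemma mk_zero: "0 = mk 0 0 0 0"
  unfolding vec_eq_iff forall_2 by simp

lemma mk_trace: "trace (mk a b c d) = a + d"
  by (simp add: trace_def sum_2)


lemma ms_mult_left: "mat_scale c X ** Y = mat_scale c (X ** Y)"
  by (simp add: vec_eq_iff mat_scale_def matrix_matrix_mult_def sum_distrib_left mult.assoc)
lemma ms_mult_right: "X ** mat_scale c Y = mat_scale c (X ** Y)"
  by (simp add: vec_eq_iff mat_scale_def matrix_matrix_mult_def sum_distrib_left algebra_simps)
lemma ms_add: "mat_scale c (X + Y) = mat_scale c X + mat_scale c Y"
  by (simp add: vec_eq_iff mat_scale_def algebra_simps)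
lemma ms_ms: "mat_scale c (mat_scale d X) = mat_scale (c*d) X"
  by (simp add: vec_eq_iff mat_scale_def algebra_simps)
lemma ms_one: "mat_scale 1 X = X"
  by (simp add: vec_eq_iff mat_scale_def)
lemma ms_plus: "mat_scale (c+d) X = mat_scale c X + mat_scale d X"
  by (simp add: vec_eq_iff mat_scale_def algebra_simps)

lemma mat_pow_eig:
  assumes "A ** P1 = mat_scale a1 P1" "A ** P2 = mat_scale a2 P2" "P1 + P2 = mat 1"
  shows "mat_pow (mat_scale c A) k = mat_scale ((c*a1)^k) P1 + mat_scale ((c*a2)^k) P2"
proof (induction k)
  case 0 then show ?case using assms(3) by (simp add: ms_one)
next
  case (Suc k)
  show ?case
    by (simp add: Suc matrix_add_ldistrib ms_mult_left ms_mult_right assms ms_ms algebra_simps)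
qed

lemma sums_vec2:
  fixes f :: "nat \<Rightarrow> complex^'n^'m"
  assumes "\<And>i j. (\<lambda>k. f k $ i $ j) sums (L $ i $ j)"
  shows "f sums L"
proof -
  have "(\<lambda>n. \<chi> i j. (\<Sum>k<n. f k $ i $ j)) \<longlonglongrightarrow> (\<chi> i j. L $ i $ j)"
    using assms unfolding sums_def by (intro tendsto_vec_lambda) auto
  moreover have "(\<lambda>n. \<chi> i j. (\<Sum>k<n. f k $ i $ j)) = (\<lambda>n. \<Sum>k<n. f k)"
    by (rule ext) (simp add: vec_eq_iff sum_component)
  ultimately show ?thesis unfolding sums_def by simp
qed

lemma mat_exp_eig:
  assumes "A ** P1 = mat_scale a1 P1" "A ** P2 = mat_scale a2 P2" "P1 + P2 = mat 1"
  shows "mat_exp (mat_scale c A) = mat_scale (exp (c*a1)) P1 + mat_scale (exp (c*a2)) P2"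
proof -
  have "(\<lambda>k. (1 / fact k) *\<^sub>R mat_pow (mat_scale c A) k) sums (mat_scale (exp (c*a1)) P1 + mat_scale (exp (c*a2)) P2)"
  proof (rule sums_vec2)
    fix i j
    have e: "(\<lambda>k. (c*a)^k / fact k) sums exp (c*a)" for a
      using exp_converges[of "c*a"] by (simp add: scaleR_conv_of_real divide_inverse mult.commute)
    have S: "(\<lambda>k. (c*a1)^k / fact k * P1$i$j + (c*a2)^k / fact k * P2$i$j) sums (exp (c*a1) * P1$i$j + exp (c*a2) * P2$i$j)"
      by (intro sums_add sums_mult2 e)
    show "(\<lambda>k. ((1 / fact k) *\<^sub>R mat_pow (mat_scale c A) k) $ i $ j) sums
      ((mat_scale (exp (c*a1)) P1 + mat_scale (exp (c*a2)) P2) $ i $ j)"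
    proof -
      have "((1 / fact k) *\<^sub>R mat_pow (mat_scale c A) k) $ i $ j = (c*a1)^k / fact k * P1$i$j + (c*a2)^k / fact k * P2$i$j" for k
        unfolding mat_pow_eig[OF assms] vector_scaleR_component
        by (simp add: mat_scale_def algebra_simps divide_inverse scaleR_conv_of_real)
      then show ?thesis using S by (simp add: mat_scale_def)
    qed
  qed
  then show ?thesis unfolding mat_exp_def by (rule sums_unique[symmetric])
qed


lemma hermitian_mk:
  assumes "hermitian_mat A"
  shows "A = mk (of_real (Re (A$1$1))) (A$1$2) (cnj (A$1$2)) (of_real (Re (A$2$2)))"
proof -
  have h: "\<And>i j. cnj (A $ j $ i) = A $ i $ j"
    using assms unfolding hermitian_mat_def adjoint_mat_def vec_eq_iff by auto
  have "A$1$1 = of_real (Re (A$1$1))" using h[of 1 1] by (metis Reals_cnj_iff complex_is_Real_iff of_real_Re)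
  moreover have "A$2$2 = of_real (Re (A$2$2))" using h[of 2 2] by (metis Reals_cnj_iff complex_is_Real_iff of_real_Re)
  moreover have "A$2$1 = cnj (A$1$2)" using h[of 2 1] by (metis complex_cnj_cnj)
  ultimately show ?thesis by (subst mk_eta) simp
qed

lemma spec_mk:
  fixes x y :: real and z :: complex
  defines "d \<equiv> (x - y) / 2" and "m \<equiv> (x + y) / 2"
  defines "r \<equiv> sqrt (d^2 + (cmod z)^2)"
  defines "P1 \<equiv> mk (of_real ((1 + d/r)/2)) (z / of_real (2*r)) (cnj z / of_real (2*r)) (of_real ((1 - d/r)/2))"
  defines "P2 \<equiv> mk (of_real ((1 - d/r)/2)) (- z / of_real (2*r)) (- cnj z / of_real (2*r)) (of_real ((1 + d/r)/2))"
  assumes "r > 0"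
  shows "mk (of_real x) z (cnj z) (of_real y) ** P1 = mat_scale (of_real (m + r)) P1"
    "mk (of_real x) z (cnj z) (of_real y) ** P2 = mat_scale (of_real (m - r)) P2"
    "P1 + P2 = mat 1"
    "mk (of_real x) z (cnj z) (of_real y) = mat_scale (of_real (m + r)) P1 + mat_scale (of_real (m - r)) P2"
proof -
  have zz: "z * cnj z = of_real (r^2 - d^2)"
    using \<open>r > 0\<close> unfolding r_def complex_norm_square[symmetric] by simp
  have zz': "cnj z * z = of_real (r^2 - d^2)" using zz by (simp add: mult.commute)
  have x: "x = m + d" and y: "y = m - d" unfolding m_def d_def by (auto simp: field_simps)
  have r0: "complex_of_real r \<noteq> 0" using \<open>r>0\<close> by simp
  show "mk (of_real x) z (cnj z) (of_real y) ** P1 = mat_scale (of_real (m + r)) P1"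
    unfolding P1_def mk_mult mk_scale mk_eq_iff x y using r0
    by (simp add: field_simps zz zz') (simp add: algebra_simps power2_eq_square)
  show "mk (of_real x) z (cnj z) (of_real y) ** P2 = mat_scale (of_real (m - r)) P2"
    unfolding P2_def mk_mult mk_scale mk_eq_iff x y using r0
    by (simp add: field_simps zz zz') (simp add: algebra_simps power2_eq_square)
  show "P1 + P2 = mat 1"
    unfolding P1_def P2_def mk_add mk_one mk_eq_iff using r0
    by (simp add: field_simps)
  show "mk (of_real x) z (cnj z) (of_real y) = mat_scale (of_real (m + r)) P1 + mat_scale (of_real (m - r)) P2"
    unfolding P1_def P2_def mk_add mk_scale mk_eq_iff x y using r0
    by (simp add: field_simps)
qed


lemma recip_basis:
  fixes na nb nc ma mb mc xa xb xc :: real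
  assumes ka_def: "ka = nb*mc - nc*mb" and kb_def: "kb = nc*ma - na*mc" and kc_def: "kc = na*mb - nb*ma"
  assumes "na*xa + nb*xb + nc*xc = 0" "ma*xa + mb*xb + mc*xc = 0" "ka*xa + kb*xb + kc*xc = 0"
    and "(ka, kb, kc) \<noteq> (0, 0, 0)"
  shows "xa = 0 \<and> xb = 0 \<and> xc = 0"
proof -
  let ?N = "ka^2 + kb^2 + kc^2"
  have N: "?N > 0"
  proof -
    have "ka^2 > 0 \<or> kb^2 > 0 \<or> kc^2 > 0" using assms(7) by auto
    moreover have "ka^2 \<ge> 0" "kb^2 \<ge> 0" "kc^2 \<ge> 0" by auto
    ultimately show ?thesis by linarith
  qed
  have ga: "?N * xa = (na*xa + nb*xb + nc*xc) * (mb*kc - mc*kb) + (ma*xa + mb*xb + mc*xc) * (kb*nc - kc*nb) + (ka*xa + kb*xb + kc*xc) * ka"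
    unfolding ka_def kb_def kc_def by (simp add: algebra_simps power2_eq_square)
  have gb: "?N * xb = (na*xa + nb*xb + nc*xc) * (mc*ka - ma*kc) + (ma*xa + mb*xb + mc*xc) * (kc*na - ka*nc) + (ka*xa + kb*xb + kc*xc) * kb"
    unfolding ka_def kb_def kc_def by (simp add: algebra_simps power2_eq_square)
  have gc: "?N * xc = (na*xa + nb*xb + nc*xc) * (ma*kb - mb*ka) + (ma*xa + mb*xb + mc*xc) * (ka*nb - kb*na) + (ka*xa + kb*xb + kc*xc) * kc"
    unfolding ka_def kb_def kc_def by (simp add: algebra_simps power2_eq_square)
  show ?thesis using ga gb gc assms(4,5,6) N by auto
qed
lemma coord_final:
  fixes a1 a2 b1 b2 d :: real and z w e :: complex
  defines "A \<equiv> mk (of_real a1) z (cnj z) (of_real a2)" and "B \<equiv> mk (of_real b1) w (cnj w) (of_real b2)"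
    and "D \<equiv> mk (of_real d) e (cnj e) (- of_real d)"
  assumes comm: "A ** B \<noteq> B ** A"
    and t1: "trace (A ** D) = 0" and t2: "trace (B ** D) = 0" and t3: "trace (A ** B ** D) = 0"
  shows "d = 0 \<and> e = 0"
proof -
  obtain p q where z: "z = Complex p q" by (cases z)
  obtain ss t where w: "w = Complex ss t" by (cases w)
  obtain u v where e: "e = Complex u v" by (cases e)
  have e1: "(a1 - a2)/2 * d + p * u + q * v = 0"
    using t1 unfolding A_def D_def z e mk_mult mk_trace by (simp add: complex_eq_iff field_simps) 
  have e2: "(b1 - b2)/2 * d + ss * u + t * v = 0"
    using t2 unfolding B_def D_def w e mk_mult mk_trace by (simp add: complex_eq_iff field_simps)
  have e3: "(p * t - q * ss) * d + (q*((b1-b2)/2) - (a1-a2)/2*t) * u + ((a1-a2)/2* ss - p*((b1-b2)/2)) * v = 0"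
    using t3 unfolding A_def B_def D_def z w e mk_mult mk_trace by (simp add: complex_eq_iff field_simps)
  have nz: "(p * t - q * ss, q*((b1-b2)/2) - (a1-a2)/2*t, (a1-a2)/2* ss - p*((b1-b2)/2)) \<noteq> (0,0,0)"
  proof
    assume "(p * t - q * ss, q*((b1-b2)/2) - (a1-a2)/2*t, (a1-a2)/2* ss - p*((b1-b2)/2)) = (0,0,0)"
    then have h: "p * t = q * ss" "q*(b1-b2) = (a1-a2)*t" "(a1-a2)* ss = p*(b1-b2)" by (auto simp: field_simps)
    have "A ** B = B ** A"
      unfolding A_def B_def z w mk_mult mk_eq_iff using h by (simp add: complex_eq_iff algebra_simps)
    with comm show False by simp
  qed
  have "d = 0 \<and> u = 0 \<and> v = 0"
    by (rule recip_basis[where na="(a1-a2)/2" and nb=p and nc=q and ma="(b1-b2)/2" and mb=ss and mc=t and xa=d and xb=u and xc=v, OF refl refl refl]) (use e1 e2 e3 nz in \<open>simp_all add: algebra_simps\<close>)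
  then show ?thesis using e by (simp add: complex_eq_iff)
qed


lemma mm_add_r: "(X + Y) ** Z = X ** Z + Y ** (Z::complex^'n^'n)"
  by (simp add: vec_eq_iff matrix_matrix_mult_def sum.distrib algebra_simps)
lemma mm_diff_l: "Z ** (X - Y) = Z ** X - Z ** (Y::complex^'n^'n)"
  by (simp add: vec_eq_iff matrix_matrix_mult_def sum_subtractf algebra_simps)
lemma trace_ms: "trace (mat_scale c X) = c * trace (X::complex^'n^'n)"
  by (simp add: trace_def mat_scale_def sum_distrib_left)

lemma psd_herm:
  fixes M :: "complex^2^2"
  assumes "psd_mat M"
  shows "hermitian_mat M"
proof -
  define Q where "Q v = (\<Sum>i\<in>UNIV. cnj (v $ i) * (M *v v) $ i)" for v :: "complex^2"
  have real: "Im (Q v) = 0" for v using assms unfolding psd_mat_def Q_def by auto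
  define V where "V a b = ((\<chi> i. if i = 1 then a else b) :: complex^2)" for a b :: complex
  have V1: "V a b $ 1 = a" "V a b $ 2 = b" for a b by (simp_all add: V_def)
  have QV: "Q (V a b) = cnj a * (M$1$1 * a + M$1$2 * b) + cnj b * (M$2$1 * a + M$2$2 * b)" for a b
    unfolding Q_def by (simp add: sum_2 V1 matrix_vector_mult_def)
  have h1: "Im (M$1$1) = 0" using real[of "V 1 0"] by (simp add: QV)
  have h2: "Im (M$2$2) = 0" using real[of "V 0 1"] by (simp add: QV)
  have h3: "Im (M$1$2) + Im (M$2$1) = 0" using real[of "V 1 1"] h1 h2 by (simp add: QV)
  have h4: "Re (M$1$2) - Re (M$2$1) = 0" using real[of "V 1 \<i>"] h1 h2 by (simp add: QV)
  have "adjoint_mat M = M"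
    unfolding adjoint_mat_def vec_eq_iff forall_2 using h1 h2 h3 h4
    by (simp add: complex_eq_iff)
  then show ?thesis unfolding hermitian_mat_def .
qed

lemma scalar_comm: "mat_scale c (mat 1) ** (B::complex^'n^'n) = B ** mat_scale c (mat 1 :: complex^'n^'n)"
  by (metis ms_mult_left ms_mult_right matrix_mul_lid matrix_mul_rid)

lemma herm_spec:
  fixes A :: "complex^2^2"
  assumes "hermitian_mat A" "A ** B \<noteq> B ** A"
  obtains a1 a2 :: real and P1 P2 where "a1 \<noteq> a2" "A ** P1 = mat_scale (of_real a1) P1"
    "A ** P2 = mat_scale (of_real a2) P2" "P1 + P2 = mat 1"
    "A = mat_scale (of_real a1) P1 + mat_scale (of_real a2) P2"
proof -
  define x y z where "x = Re (A$1$1)" "y = Re (A$2$2)" "z = A$1$2"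
  have A: "A = mk (of_real x) z (cnj z) (of_real y)" using hermitian_mk[OF assms(1)] x_y_z_def by simp
  define d m r where "d = (x - y)/2" "m = (x+y)/2" "r = sqrt (d^2 + (cmod z)^2)"
  have "r > 0"
  proof (rule ccontr)
    assume "\<not> r > 0"
    then have "sqrt (d^2 + (cmod z)^2) = 0" using real_sqrt_ge_zero[of "d^2 + (cmod z)^2"] unfolding d_m_r_def(3)[symmetric] by simp
    then have "d^2 + (cmod z)^2 = 0" by simp
    then have "d = 0" "z = 0" by (simp_all add: add_nonneg_eq_0_iff)
    then have "A = mat_scale (of_real x) (mat 1)" unfolding A mk_one mk_scale d_m_r_def by simp
    with assms(2) scalar_comm show False by metis
  qed
  show ?thesis
    apply (rule that[of "m + r" "m - r"])
    using spec_mk[of x y z] \<open>r > 0\<close> unfolding A d_m_r_def[symmetric] by (auto simp: d_m_r_def)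
qed


lemma alg_final:
  fixes A B \<rho> \<rho>' P1 P2 Q1 Q2 :: "complex^2^2"
  assumes hA: "hermitian_mat A" and hB: "hermitian_mat B" and comm: "A ** B \<noteq> B ** A"
    and d1: "density_operator \<rho>" and d2: "density_operator \<rho>'"
    and sA: "A = mat_scale a1 P1 + mat_scale a2 P2" "P1 + P2 = mat 1"
    and sB: "B = mat_scale b1 Q1 + mat_scale b2 Q2" "Q1 + Q2 = mat 1"
    and eq: "\<And>X Y. X \<in> {P1, P2} \<Longrightarrow> Y \<in> {Q1, Q2} \<Longrightarrow> trace (X ** Y ** \<rho>) = trace (X ** Y ** \<rho>')"
  shows "\<rho> = \<rho>'"
proof -
  define D where "D = \<rho> - \<rho>'"
  define T where "T X Y = trace (X ** Y ** D)" for X Y :: "complex^2^2"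
  have T0: "T X Y = 0" if "X \<in> {P1, P2}" "Y \<in> {Q1, Q2}" for X Y
    using eq[OF that] unfolding T_def D_def mm_diff_l trace_sub by simp
  have Tl: "T (X + X') Y = T X Y + T X' Y" "T (mat_scale c X) Y = c * T X Y" for X X' Y c
    unfolding T_def by (simp_all add: mm_add_r trace_add ms_mult_left trace_ms)
  have Tr: "T X (Y + Y') = T X Y + T X Y'" "T X (mat_scale c Y) = c * T X Y" for X Y Y' c
    unfolding T_def by (simp_all add: matrix_add_ldistrib mm_add_r trace_add ms_mult_left ms_mult_right trace_ms)
  have t1: "T A (mat 1) = 0"
  proof -
    have "T A (Q1 + Q2) = 0" unfolding sA(1) Tl Tr by (simp add: T0)
    then show ?thesis using sB(2) by simp
  qed
  have t2: "T (mat 1) B = 0"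
  proof -
    have "T (P1 + P2) B = 0" unfolding sB(1) Tl Tr by (simp add: T0)
    then show ?thesis using sA(2) by simp
  qed
  have t3: "T A B = 0" unfolding sA(1) sB(1) Tl Tr by (simp add: T0)
  have hr: "hermitian_mat \<rho>" "hermitian_mat \<rho>'"
    using d1 d2 psd_herm unfolding density_operator_def by auto
  have tr: "trace \<rho> = 1" "trace \<rho>' = 1" using d1 d2 unfolding density_operator_def by auto
  define d e where "d = Re (\<rho>$1$1) - Re (\<rho>'$1$1)" "e = \<rho>$1$2 - \<rho>'$1$2"
  have D: "D = mk (of_real d) e (cnj e) (- of_real d)"
  proof -
    have r1: "\<rho> = mk (of_real (Re (\<rho>$1$1))) (\<rho>$1$2) (cnj (\<rho>$1$2)) (of_real (Re (\<rho>$2$2)))"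
      by (rule hermitian_mk[OF hr(1)])
    have r2: "\<rho>' = mk (of_real (Re (\<rho>'$1$1))) (\<rho>'$1$2) (cnj (\<rho>'$1$2)) (of_real (Re (\<rho>'$2$2)))"
      by (rule hermitian_mk[OF hr(2)])
    have "Re (\<rho>$1$1) + Re (\<rho>$2$2) = 1" using tr(1) by (subst (asm) r1) (simp add: mk_trace complex_eq_iff)
    moreover have "Re (\<rho>'$1$1) + Re (\<rho>'$2$2) = 1" using tr(2) by (subst (asm) r2) (simp add: mk_trace complex_eq_iff)
    ultimately show ?thesis unfolding D_def d_e_def
      by (subst r1, subst r2) (simp add: mk_diff mk_eq_iff complex_eq_iff)
  qed
  obtain x y z where A: "A = mk (of_real x) z (cnj z) (of_real y)" using hermitian_mk[OF hA] by blast
  obtain x' y' w where B: "B = mk (of_real x') w (cnj w) (of_real y')" using hermitian_mk[OF hB] by blast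
  have "d = 0 \<and> e = 0"
  proof (rule coord_final[of x z y x' w y' d e])
    show "mk (of_real x) z (cnj z) (of_real y) ** mk (of_real x') w (cnj w) (of_real y') \<noteq>
      mk (of_real x') w (cnj w) (of_real y') ** mk (of_real x) z (cnj z) (of_real y)" using comm A B by simp
    show "trace (mk (of_real x) z (cnj z) (of_real y) ** mk (of_real d) e (cnj e) (- of_real d)) = 0"
      using t1 unfolding T_def A D by simp
    show "trace (mk (of_real x') w (cnj w) (of_real y') ** mk (of_real d) e (cnj e) (- of_real d)) = 0"
      using t2 unfolding T_def B D by simp
    show "trace (mk (of_real x) z (cnj z) (of_real y) ** mk (of_real x') w (cnj w) (of_real y') ** mk (of_real d) e (cnj e) (- of_real d)) = 0"
      using t3 unfolding T_def A B D by simp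
  qed
  then have "D = 0" unfolding D by (simp add: mk_zero)
  then show ?thesis unfolding D_def by simp
qed


definition eb :: "nat \<Rightarrow> real \<Rightarrow> real" where
  "eb m t = (if 0 < t \<and> t < 1 then exp (-1 / (t*(1-t))) / (t*(1-t))^m else 0)"

definition qm :: "nat \<Rightarrow> real \<Rightarrow> real" where
  "qm m t = (1 - 2*t) * (1 - real m * (t*(1-t)))"

lemma eb_sym: "eb m (1 - t) = eb m t"
  unfolding eb_def by (auto simp: algebra_simps)

lemma eb_nonneg: "eb m t \<ge> 0"
  unfolding eb_def by auto

lemma eb_pos: "0 < t \<Longrightarrow> t < 1 \<Longrightarrow> eb m t > 0"
  unfolding eb_def by auto

lemma lim_exp_inv: "((\<lambda>u::real. exp (-1/u) / u^k) \<longlongrightarrow> 0) (at_right 0)"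
proof -
  have "((\<lambda>y::real. y^k / exp y) \<longlongrightarrow> 0) at_top" by (rule tendsto_power_div_exp_0)
  then have "((\<lambda>u::real. (inverse u)^k / exp (inverse u)) \<longlongrightarrow> 0) (at_right 0)"
    by (rule filterlim_compose) (rule filterlim_inverse_at_top_right)
  moreover have "eventually (\<lambda>u::real. (inverse u)^k / exp (inverse u) = exp (-1/u) / u^k) (at_right 0)"
    by (auto simp: eventually_at_right_less exp_minus field_simps power_inverse intro!: eventually_mono[OF eventually_at_right_less])
  ultimately show ?thesis by (rule Lim_transform_eventually)
qed

lemma eb_lim0: "((\<lambda>t. eb m t / t) \<longlongrightarrow> 0) (at_right 0)"
proof -
  define u where "u t = t * (1 - t)" for t :: real
  have u: "filterlim u (at_right 0) (at_right 0)"
  proof -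
    have "(u \<longlongrightarrow> 0) (at_right 0)" unfolding u_def by (auto intro!: tendsto_eq_intros)
    moreover have "eventually (\<lambda>t. u t > 0) (at_right (0::real))"
      unfolding u_def by (rule eventually_at_rightI[of 0 1]) auto
    ultimately show ?thesis by (rule tendsto_imp_filterlim_at_right)
  qed
  have L: "((\<lambda>t. exp (-1/u t) / (u t)^(Suc m)) \<longlongrightarrow> 0) (at_right 0)"
    using filterlim_compose[OF lim_exp_inv u] .
  show ?thesis
  proof (rule tendsto_sandwich[OF _ _ tendsto_const L])
    have ev: "eventually (\<lambda>t. 0 < t \<and> t < 1) (at_right (0::real))"
      by (rule eventually_at_rightI[of 0 1]) auto
    show "eventually (\<lambda>t. 0 \<le> eb m t / t) (at_right 0)"
      using ev by eventually_elim (simp add: eb_nonneg)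
    show "eventually (\<lambda>t. eb m t / t \<le> exp (-1/u t) / (u t)^(Suc m)) (at_right 0)"
      using ev
    proof eventually_elim
      case (elim t)
      then have ut: "0 < u t" "u t \<le> t" unfolding u_def by (auto simp: mult_le_cancel_left1)
      have "eb m t / t = exp (-1/u t) / ((u t)^m * t)" using elim unfolding eb_def u_def by simp
      also have "\<dots> \<le> exp (-1/u t) / ((u t)^m * u t)"
        using ut by (intro divide_left_mono mult_left_mono mult_pos_pos) auto
      finally show ?case by (simp add: mult.commute)
    qed
  qed
qed


lemma eb_deriv_in:
  assumes "0 < t" "t < 1"
  shows "((\<lambda>t. exp (-1 / (t*(1-t))) / (t*(1-t))^m) has_real_derivative (eb (m+2) t * qm m t)) (at t)"
proof -
  define u where "u = t*(1-t)"
  have u: "u > 0" using assms unfolding u_def by simp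
  have dE: "((\<lambda>t. exp (-1 / (t*(1-t)))) has_real_derivative (exp (-1/u) * ((1 - 2*t) / u^2))) (at t)"
  proof -
    have "((\<lambda>t. -1 / (t*(1-t))) has_real_derivative ((1 - 2*t) / u^2)) (at t)"
    proof -
      have "((\<lambda>t. t*(1-t)) has_real_derivative (1 - 2*t)) (at t)"
        by (rule derivative_eq_intros refl)+ simp
      from DERIV_inverse_fun[OF this, of ] u
      have "((\<lambda>t. inverse (t*(1-t))) has_real_derivative (- ((1 - 2*t) * inverse (u^2)))) (at t)"
        using assms unfolding u_def by (simp add: power2_eq_square)
      from DERIV_minus[OF this] show ?thesis by (simp add: divide_inverse)
    qed
    from DERIV_chain2[OF DERIV_exp this] show ?thesis unfolding u_def by simp
  qed
  have dU: "((\<lambda>t. (t*(1-t))^m) has_real_derivative (real m * u^(m - 1) * (1 - 2*t))) (at t)"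
  proof -
    have "((\<lambda>t. t*(1-t)) has_real_derivative (1 - 2*t)) (at t)"
      by (rule derivative_eq_intros refl)+ simp
    from DERIV_chain2[OF DERIV_pow this, of m] show ?thesis unfolding u_def by (simp add: mult.commute)
  qed
  have D: "((\<lambda>t. exp (-1 / (t*(1-t))) / (t*(1-t))^m) has_real_derivative
    ((exp (-1/u) * ((1 - 2*t) / u^2)) * u^m - exp (-1/u) * (real m * u^(m - 1) * (1 - 2*t))) / (u^m * u^m)) (at t)"
    using DERIV_divide[OF dE dU] u assms unfolding u_def by simp
  have eq: "((exp (-1/u) * ((1 - 2*t) / u^2)) * u^m - exp (-1/u) * (real m * u^(m - 1) * (1 - 2*t))) / (u^m * u^m)
    = exp (-1/u) / u^(m+2) * ((1 - 2*t) * (1 - real m * u))"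
  proof (cases m)
    case 0 then show ?thesis using u by (simp add: field_simps power2_eq_square)
  next
    case (Suc k)
    then show ?thesis using u by (simp add: field_simps power2_eq_square)
  qed
  note D2 = D[unfolded eq]
  show ?thesis using D2 unfolding eb_def qm_def u_def using assms by (simp add: power_add mult.commute)
qed


lemma eb_deriv0: "(eb m has_real_derivative 0) (at 0)"
proof -
  have "((\<lambda>y. (eb m y - eb m 0) / (y - 0)) \<longlongrightarrow> 0) (at 0)"
    unfolding filterlim_at_split
  proof
    show "((\<lambda>y. (eb m y - eb m 0) / (y - 0)) \<longlongrightarrow> 0) (at_left 0)"
    proof (rule tendsto_eventually)
      show "eventually (\<lambda>y. (eb m y - eb m 0) / (y - 0) = 0) (at_left (0::real))"
        by (rule eventually_at_leftI[of "-1"]) (auto simp: eb_def)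
    qed
    show "((\<lambda>y. (eb m y - eb m 0) / (y - 0)) \<longlongrightarrow> 0) (at_right 0)"
      using eb_lim0[of m] by (simp add: eb_def)
  qed
  then show ?thesis by (simp add: has_field_derivative_iff)
qed

lemma eb_deriv: "(eb m has_real_derivative (eb (m+2) t * qm m t)) (at t)"
proof -
  consider "t < 0" | "t = 0" | "0 < t \<and> t < 1" | "t = 1" | "t > 1" by linarith
  then show ?thesis
  proof cases
    case 1
    have "((\<lambda>_. 0) has_real_derivative 0) (at t)" by simp
    then have "(eb m has_real_derivative 0) (at t)"
      by (rule has_field_derivative_transform_within_open[where S="{..<0}"]) (use 1 in \<open>auto simp: eb_def\<close>)
    then show ?thesis using 1 by (simp add: eb_def)
  next
    case 2 then show ?thesis using eb_deriv0 by (simp add: eb_def)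
  next
    case 3
    have "(eb m has_real_derivative (eb (m+2) t * qm m t)) (at t)"
      by (rule has_field_derivative_transform_within_open[OF eb_deriv_in, where S="{0<..<1}"]) (use 3 in \<open>auto simp: eb_def\<close>)
    then show ?thesis .
  next
    case 4
    have e: "eb m = (\<lambda>t. eb m (1 - t))" by (simp add: eb_sym)
    have "((\<lambda>t. eb m (1 - t)) has_real_derivative 0 * (-1)) (at t)"
      by (rule DERIV_chain2) (use 4 eb_deriv0 in \<open>auto intro!: derivative_eq_intros\<close>)
    then show ?thesis using 4 by (subst e) (simp add: eb_def)
  next
    case 5
    have "((\<lambda>_. 0) has_real_derivative 0) (at t)" by simp
    then have "(eb m has_real_derivative 0) (at t)"
      by (rule has_field_derivative_transform_within_open[where S="{1<..}"]) (use 5 in \<open>auto simp: eb_def\<close>)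
    then show ?thesis using 5 by (simp add: eb_def)
  qed
qed


definition dfam :: "(real \<Rightarrow> complex) set \<Rightarrow> bool" where
  "dfam F \<longleftrightarrow> (\<forall>g\<in>F. \<exists>g'\<in>F. \<forall>x. (g has_vector_derivative g' x) (at x)) \<and>
     (\<forall>f\<in>F. \<forall>g\<in>F. (\<lambda>x. f x + g x) \<in> F) \<and> (\<forall>c. \<forall>f\<in>F. (\<lambda>x. c * f x) \<in> F)"

definition smooth1 :: "(real \<Rightarrow> complex) \<Rightarrow> bool" where
  "smooth1 h \<longleftrightarrow> (\<exists>F. dfam F \<and> h \<in> F)"

lemma smooth1_deriv:
  assumes "smooth1 h"
  obtains h' where "smooth1 h'" "\<And>x. (h has_vector_derivative h' x) (at x)"
proof -
  obtain F where F: "dfam F" "h \<in> F" using assms unfolding smooth1_def by blast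
  then obtain h' where "h' \<in> F" "\<And>x. (h has_vector_derivative h' x) (at x)"
    unfolding dfam_def by blast
  with F show ?thesis using that unfolding smooth1_def by blast
qed

definition UP :: "complex poly" where "UP = [:0, 1, -1:]"

lemma poly_UP: "poly UP (of_real t) = of_real (t * (1 - t))"
  by (simp add: UP_def algebra_simps)

definition BF :: "(real \<Rightarrow> complex) set" where
  "BF = {(\<lambda>t. poly p (of_real t) * of_real (eb m t)) | p m. True}"

lemma eb_shift: "eb m t = (t*(1-t))^k * eb (m+k) t"
  unfolding eb_def by (auto simp: power_add field_simps)

lemma dfam_BF: "dfam BF"
  unfolding dfam_def
proof (intro conjI ballI allI)
  fix g assume "g \<in> BF"
  then obtain p m where g: "g = (\<lambda>t. poly p (of_real t) * of_real (eb m t))" unfolding BF_def by auto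
  define Q where "Q = [:1, -2:] * ([:1:] - smult (of_nat m) UP)"
  have pQ: "poly Q (of_real t) = of_real (qm m t)" for t
    unfolding Q_def qm_def by (simp add: poly_UP algebra_simps)
  define p' where "p' = pderiv p * UP^2 + p * Q"
  have "(g has_vector_derivative (poly p' (of_real x) * of_real (eb (m+2) x))) (at x)" for x
  proof -
    have d1: "((\<lambda>t. poly p (of_real t)) has_vector_derivative poly (pderiv p) (of_real x)) (at x)"
      by (rule has_vector_derivative_real_field) (rule poly_DERIV)
    have d2: "((\<lambda>t. complex_of_real (eb m t)) has_vector_derivative of_real (eb (m+2) x * qm m x)) (at x)"
      by (rule has_vector_derivative_of_real) (rule eb_deriv)
    have "(g has_vector_derivative (poly p (of_real x) * of_real (eb (m+2) x * qm m x) + poly (pderiv p) (of_real x) * of_real (eb m x))) (at x)"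
      unfolding g by (rule has_vector_derivative_mult[OF d1 d2])
    moreover have "poly p (of_real x) * of_real (eb (m+2) x * qm m x) + poly (pderiv p) (of_real x) * of_real (eb m x)
      = poly p' (of_real x) * of_real (eb (m+2) x)"
      unfolding p'_def using eb_shift[of m x 2] by (simp add: pQ poly_UP algebra_simps)
    ultimately show ?thesis by simp
  qed
  moreover have "(\<lambda>x. poly p' (of_real x) * of_real (eb (m+2) x)) \<in> BF" unfolding BF_def by blast
  ultimately show "\<exists>g'\<in>BF. \<forall>x. (g has_vector_derivative g' x) (at x)"
    by (intro bexI[of _ "\<lambda>x. poly p' (of_real x) * of_real (eb (m+2) x)"]) auto
next
  fix f g assume "f \<in> BF" "g \<in> BF"
  then obtain p m q k where f: "f = (\<lambda>t. poly p (of_real t) * of_real (eb m t))"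
    and g: "g = (\<lambda>t. poly q (of_real t) * of_real (eb k t))" unfolding BF_def by auto
  have "(\<lambda>x. f x + g x) = (\<lambda>t. poly (p * UP^k + q * UP^m) (of_real t) * of_real (eb (m+k) t))"
    unfolding f g using eb_shift[of m _ k] eb_shift[of k _ m] by (auto simp: poly_UP algebra_simps)
  then show "(\<lambda>x. f x + g x) \<in> BF" unfolding BF_def by blast
next
  fix c f assume "f \<in> BF"
  then obtain p m where f: "f = (\<lambda>t. poly p (of_real t) * of_real (eb m t))" unfolding BF_def by auto
  have "(\<lambda>x. c * f x) = (\<lambda>t. poly (smult c p) (of_real t) * of_real (eb m t))"
    unfolding f by (simp add: algebra_simps)
  then show "(\<lambda>x. c * f x) \<in> BF" unfolding BF_def by blast
qed

definition h0 :: "real \<Rightarrow> complex" where "h0 t = of_real (eb 0 t)"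

lemma smooth1_h0: "smooth1 h0"
proof -
  have "h0 = (\<lambda>t. poly [:1:] (of_real t) * of_real (eb 0 t))" by (simp add: h0_def fun_eq_iff)
  then have "h0 \<in> BF" unfolding BF_def by blast
  then show ?thesis using dfam_BF unfolding smooth1_def by blast
qed


lemma dexp_i: "((\<lambda>x::real. exp (\<i> * complex_of_real (\<xi> * x))) has_vector_derivative (\<i> * of_real \<xi> * exp (\<i> * complex_of_real (\<xi> * x)))) (at x)"
proof -
  have "((\<lambda>z. exp (\<i> * of_real \<xi> * z)) has_field_derivative (\<i> * of_real \<xi> * exp (\<i> * of_real \<xi> * of_real x))) (at (of_real x))"
    by (rule derivative_eq_intros refl)+ simp
  from has_vector_derivative_real_field[OF this] show ?thesis by (simp add: mult.assoc)
qed

lemma smooth1_trans: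
  assumes "smooth1 h" shows "smooth1 (\<lambda>x. h (x - \<mu>))"
proof -
  obtain F where F: "dfam F" "h \<in> F" using assms unfolding smooth1_def by auto
  define G where "G = (\<lambda>g. \<lambda>x. g (x - \<mu>)) ` F"
  have "dfam G"
    unfolding dfam_def
  proof (intro conjI ballI allI)
    fix g assume "g \<in> G"
    then obtain f where f: "f \<in> F" "g = (\<lambda>x. f (x - \<mu>))" unfolding G_def by auto
    then obtain f' where f': "f' \<in> F" "\<And>x. (f has_vector_derivative f' x) (at x)" using F(1) unfolding dfam_def by metis
    have "(g has_vector_derivative f' (x - \<mu>)) (at x)" for x
    proof -
      have "((\<lambda>x. x - \<mu>) has_vector_derivative 1) (at x)" by (rule derivative_eq_intros refl)+ simp
      from vector_diff_chain_at[OF this f'(2)] show ?thesis unfolding f(2) by (simp add: o_def)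
    qed
    moreover have "(\<lambda>x. f' (x - \<mu>)) \<in> G" unfolding G_def by (rule image_eqI[OF _ f'(1)]) simp
    ultimately show "\<exists>g'\<in>G. \<forall>x. (g has_vector_derivative g' x) (at x)"
      by (intro bexI[of _ "\<lambda>x. f' (x - \<mu>)"]) auto
  next
    fix f g assume "f \<in> G" "g \<in> G"
    then obtain f1 g1 where "f1 \<in> F" "g1 \<in> F" "f = (\<lambda>x. f1 (x - \<mu>))" "g = (\<lambda>x. g1 (x - \<mu>))" unfolding G_def by auto
    moreover then have "(\<lambda>x. f1 x + g1 x) \<in> F" using F(1) unfolding dfam_def by blast
    ultimately show "(\<lambda>x. f x + g x) \<in> G" unfolding G_def by (auto intro!: image_eqI[of _ _ "\<lambda>x. f1 x + g1 x"])
  next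
    fix c f assume "f \<in> G"
    then obtain f1 where "f1 \<in> F" "f = (\<lambda>x. f1 (x - \<mu>))" unfolding G_def by auto
    moreover then have "(\<lambda>x. c * f1 x) \<in> F" using F(1) unfolding dfam_def by blast
    ultimately show "(\<lambda>x. c * f x) \<in> G" unfolding G_def by (auto intro!: image_eqI[of _ _ "\<lambda>x. c * f1 x"])
  qed
  moreover have "(\<lambda>x. h (x - \<mu>)) \<in> G" unfolding G_def using F by blast
  ultimately show ?thesis unfolding smooth1_def by blast
qed

lemma smooth1_mod:
  assumes "smooth1 h" shows "smooth1 (\<lambda>x. exp (\<i> * complex_of_real (\<xi> * x)) * h x)"
proof -
  obtain F where F: "dfam F" "h \<in> F" using assms unfolding smooth1_def by auto
  define E where "E x = exp (\<i> * complex_of_real (\<xi> * x))" for x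
  define G where "G = (\<lambda>g. \<lambda>x. E x * g x) ` F"
  have "dfam G"
    unfolding dfam_def
  proof (intro conjI ballI allI)
    fix g assume "g \<in> G"
    then obtain f where f: "f \<in> F" "g = (\<lambda>x. E x * f x)" unfolding G_def by auto
    then obtain f' where f': "f' \<in> F" "\<And>x. (f has_vector_derivative f' x) (at x)" using F(1) unfolding dfam_def by metis
    have ff0: "(\<lambda>x. (\<i> * of_real \<xi>) * f x) \<in> F" using F(1) f unfolding dfam_def by blast
    have ff: "(\<lambda>x. f' x + (\<i> * of_real \<xi>) * f x) \<in> F"
    proof -
      have "\<forall>f\<in>F. \<forall>g\<in>F. (\<lambda>x. f x + g x) \<in> F" using F(1) unfolding dfam_def by blast
      from bspec[OF bspec[OF this f'(1)] ff0] show ?thesis by simp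
    qed
    have "(g has_vector_derivative E x * (f' x + (\<i> * of_real \<xi>) * f x)) (at x)" for x
    proof -
      have "(g has_vector_derivative (E x * f' x + (\<i> * of_real \<xi> * E x) * f x)) (at x)"
        unfolding f(2) E_def by (rule has_vector_derivative_mult[OF dexp_i f'(2)])
      then show ?thesis by (simp add: algebra_simps)
    qed
    moreover have "(\<lambda>x. E x * (f' x + (\<i> * of_real \<xi>) * f x)) \<in> G"
      unfolding G_def by (rule image_eqI[OF _ ff]) simp
    ultimately show "\<exists>g'\<in>G. \<forall>x. (g has_vector_derivative g' x) (at x)"
      by (intro bexI[of _ "\<lambda>x. E x * (f' x + (\<i> * of_real \<xi>) * f x)"]) auto
  next
    fix f g assume "f \<in> G" "g \<in> G"
    then obtain f1 g1 where "f1 \<in> F" "g1 \<in> F" "f = (\<lambda>x. E x * f1 x)" "g = (\<lambda>x. E x * g1 x)" unfolding G_def by auto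
    moreover then have "(\<lambda>x. f1 x + g1 x) \<in> F" using F(1) unfolding dfam_def by blast
    ultimately show "(\<lambda>x. f x + g x) \<in> G" unfolding G_def
      by (auto intro!: image_eqI[of _ _ "\<lambda>x. f1 x + g1 x"] simp: algebra_simps)
  next
    fix c f assume "f \<in> G"
    then obtain f1 where "f1 \<in> F" "f = (\<lambda>x. E x * f1 x)" unfolding G_def by auto
    moreover then have "(\<lambda>x. c * f1 x) \<in> F" using F(1) unfolding dfam_def by blast
    ultimately show "(\<lambda>x. c * f x) \<in> G" unfolding G_def
      by (auto intro!: image_eqI[of _ _ "\<lambda>x. c * f1 x"] simp: algebra_simps)
  qed
  moreover have "(\<lambda>x. E x * h x) \<in> G" unfolding G_def using F by blast
  ultimately show ?thesis unfolding smooth1_def E_def by blast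
qed


lemma smooth1_cont: "smooth1 h \<Longrightarrow> continuous_on UNIV h"
  by (metis smooth1_deriv continuous_at_imp_continuous_on has_vector_derivative_continuous)

lemma axis_comp: "(x + t *\<^sub>R axis 1 1 :: real^2) $ 1 = x $ 1 + t" "(x + t *\<^sub>R axis 1 1 :: real^2) $ 2 = x $ 2"
  "(x + t *\<^sub>R axis 2 1 :: real^2) $ 1 = x $ 1" "(x + t *\<^sub>R axis 2 1 :: real^2) $ 2 = x $ 2 + t"
  by (simp_all add: axis_def)

lemma axis_12 [simp]: "axis (1::2) (1::real) $ 2 = 0" "axis (2::2) (1::real) $ 1 = 0"
  by (simp_all add: axis_def)

lemma prod_Ck:
  assumes "smooth1 h" "smooth1 q"
  shows "Ck_fun k (\<lambda>x::real^2. h (x$1) * q (x$2))"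
  using assms
proof (induction k arbitrary: h q)
  case 0
  have "continuous_on UNIV (\<lambda>x::real^2. h (x$1) * q (x$2))"
    by (intro continuous_on_mult continuous_on_compose2[OF smooth1_cont[OF 0(1)]]
        continuous_on_compose2[OF smooth1_cont[OF 0(2)]] continuous_intros) auto
  then show ?case by simp
next
  case (Suc k)
  obtain h' where h': "smooth1 h'" "\<And>x. (h has_vector_derivative h' x) (at x)" using smooth1_deriv[OF Suc(2)] by blast
  obtain q' where q': "smooth1 q'" "\<And>x. (q has_vector_derivative q' x) (at x)" using smooth1_deriv[OF Suc(3)] by blast
  let ?F = "\<lambda>x::real^2. h (x$1) * q (x$2)"
  have cont: "continuous_on UNIV ?F"
    by (intro continuous_on_mult continuous_on_compose2[OF smooth1_cont[OF Suc(2)]]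
        continuous_on_compose2[OF smooth1_cont[OF Suc(3)]] continuous_intros) auto
  have d1: "((\<lambda>t. ?F (x + t *\<^sub>R axis 1 1)) has_vector_derivative h' (x$1) * q (x$2)) (at 0)" for x
  proof -
    have "((\<lambda>t. x$1 + t) has_vector_derivative 1) (at 0)" by (rule derivative_eq_intros refl)+ simp
    from vector_diff_chain_at[OF this h'(2)] have "((\<lambda>t. h (x$1 + t)) has_vector_derivative h' (x$1)) (at 0)"
      by (simp add: o_def)
    then have "((\<lambda>t. h (x$1 + t) * q (x$2)) has_vector_derivative h' (x$1) * q (x$2)) (at 0)"
      by (rule derivative_eq_intros refl | simp)+
    then show ?thesis unfolding axis_comp .
  qed
  have d2: "((\<lambda>t. ?F (x + t *\<^sub>R axis 2 1)) has_vector_derivative h (x$1) * q' (x$2)) (at 0)" for x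
  proof -
    have "((\<lambda>t. x$2 + t) has_vector_derivative 1) (at 0)" by (rule derivative_eq_intros refl)+ simp
    from vector_diff_chain_at[OF this q'(2)] have "((\<lambda>t. q (x$2 + t)) has_vector_derivative q' (x$2)) (at 0)"
      by (simp add: o_def)
    then have "((\<lambda>t. h (x$1) * q (x$2 + t)) has_vector_derivative h (x$1) * q' (x$2)) (at 0)"
      by (rule derivative_eq_intros refl | simp)+
    then show ?thesis unfolding axis_comp .
  qed
  have pd1: "partial_deriv 1 ?F = (\<lambda>x. h' (x$1) * q (x$2))"
    unfolding partial_deriv_def by (rule ext) (rule vector_derivative_at[OF d1])
  have pd2: "partial_deriv 2 ?F = (\<lambda>x. h (x$1) * q' (x$2))"
    unfolding partial_deriv_def by (rule ext) (rule vector_derivative_at[OF d2])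
  have diff: "\<forall>i x. (\<lambda>t. ?F (x + t *\<^sub>R axis i 1)) differentiable (at 0)"
    unfolding forall_2 using d1 d2 unfolding differentiable_def has_vector_derivative_def by blast
  have "\<forall>i. Ck_fun k (partial_deriv i ?F)"
    unfolding forall_2 pd1 pd2 using Suc.IH h'(1) q'(1) Suc.prems by auto
  then show ?case using cont diff by simp
qed


definition bump1 :: "(real \<Rightarrow> complex) \<Rightarrow> bool" where
  "bump1 h \<longleftrightarrow> smooth1 h \<and> (\<exists>R. \<forall>x. R \<le> \<bar>x\<bar> \<longrightarrow> h x = 0)"

definition FT :: "(real \<Rightarrow> complex) \<Rightarrow> real \<Rightarrow> complex" where
  "FT h t = (LINT x|lborel. exp (\<i> * complex_of_real (t * x)) * h x)"

lemma cpt_eq_ind: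
  fixes R :: real and f :: "real \<Rightarrow> complex"
  assumes "\<And>x. R \<le> \<bar>x\<bar> \<Longrightarrow> f x = 0"
  shows "f = (\<lambda>x. indicator {-R..R} x *\<^sub>R f x)"
proof (rule ext)
  fix x
  show "f x = indicator {-R..R} x *\<^sub>R f x"
  proof (cases "x \<in> {-R..R}")
    case False then have "R \<le> \<bar>x\<bar>" by (cases "x \<ge> 0") auto
    then show ?thesis using assms False by simp
  qed simp
qed

lemma cpt_integrable:
  fixes f :: "real \<Rightarrow> complex"
  assumes "continuous_on UNIV f" "\<And>x. R \<le> \<bar>x\<bar> \<Longrightarrow> f x = 0"
  shows "integrable lborel f"
proof -
  have "integrable lborel (\<lambda>x. indicator {-R..R} x *\<^sub>R f x)"
    by (rule borel_integrable_compact) (auto intro: continuous_on_subset[OF assms(1)])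
  then show ?thesis using cpt_eq_ind[of R f, OF assms(2)] by simp
qed

lemma bump1_R:
  assumes "bump1 h" obtains R where "R > 0" "\<And>x. R \<le> \<bar>x\<bar> \<Longrightarrow> h x = 0"
proof -
  obtain R where R: "\<And>x. R \<le> \<bar>x\<bar> \<Longrightarrow> h x = 0" using assms unfolding bump1_def by auto
  show ?thesis by (rule that[of "max R 1"]) (use R in auto)
qed

lemma deriv_zero_out:
  assumes "(h has_vector_derivative h' x) (at x)" "\<And>y. R \<le> \<bar>y\<bar> \<Longrightarrow> h y = (0::complex)" "R < \<bar>x\<bar>"
  shows "h' x = 0"
proof -
  have "((\<lambda>_. 0::complex) has_vector_derivative 0) (at x)" by simp
  then have "(h has_vector_derivative 0) (at x)"
    by (rule has_vector_derivative_transform_within_open[where S="{y. R < \<bar>y\<bar>}"])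
       (use assms in \<open>auto intro!: open_Collect_less continuous_intros\<close>)
  then show ?thesis using assms(1) vector_derivative_unique_at by blast
qed

lemma bump1_deriv:
  assumes "bump1 h" "R > 0" "\<And>x. R \<le> \<bar>x\<bar> \<Longrightarrow> h x = 0"
  obtains h' where "bump1 h'" "\<And>x. (h has_vector_derivative h' x) (at x)" "\<And>x. R + 1 \<le> \<bar>x\<bar> \<Longrightarrow> h' x = 0"
proof -
  obtain h' where h': "smooth1 h'" "\<And>x. (h has_vector_derivative h' x) (at x)"
    using assms(1) smooth1_deriv unfolding bump1_def by blast
  have z: "h' x = 0" if "R + 1 \<le> \<bar>x\<bar>" for x
    by (rule deriv_zero_out[OF h'(2), where R=R]) (use assms(3) that in auto)
  show ?thesis by (rule that[OF _ h'(2) z]) (use h'(1) z in \<open>auto simp: bump1_def\<close>)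
qed

lemma bump1_cont: "bump1 h \<Longrightarrow> continuous_on UNIV h"
  unfolding bump1_def using smooth1_cont by blast

lemma bump1_int:
  assumes "bump1 h" shows "integrable lborel (\<lambda>x. exp (\<i> * complex_of_real (t * x)) * h x)"
proof -
  obtain R where R: "R > 0" "\<And>x. R \<le> \<bar>x\<bar> \<Longrightarrow> h x = 0" using bump1_R[OF assms] by blast
  show ?thesis
    by (rule cpt_integrable[of _ R]) (use R bump1_cont[OF assms] in \<open>auto intro!: continuous_intros\<close>)
qed

lemma FT_deriv:
  assumes "bump1 h" "bump1 h'" "\<And>x. (h has_vector_derivative h' x) (at x)"
  shows "FT h' t = - \<i> * of_real t * FT h t"
proof -
  obtain R where R: "R > 0" "\<And>x. R \<le> \<bar>x\<bar> \<Longrightarrow> h x = 0" using bump1_R[OF assms(1)] by blast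
  obtain R' where R': "R' > 0" "\<And>x. R' \<le> \<bar>x\<bar> \<Longrightarrow> h' x = 0" using bump1_R[OF assms(2)] by blast
  define M where "M = max R R'"
  define E where "E x = exp (\<i> * complex_of_real (t * x))" for x
  define f where "f x = E x * h' x + \<i> * of_real t * (E x * h x)" for x
  have dE: "(E has_vector_derivative \<i> * of_real t * E x) (at x)" for x
    unfolding E_def by (rule dexp_i)
  have dF: "((\<lambda>x. E x * h x) has_vector_derivative f x) (at x)" for x
    using has_vector_derivative_mult[OF dE assms(3)] unfolding f_def by (simp add: algebra_simps)
  have fc: "continuous_on UNIV f"
    unfolding f_def E_def using bump1_cont[OF assms(1)] bump1_cont[OF assms(2)]
    by (auto intro!: continuous_intros)
  have fz: "M \<le> \<bar>x\<bar> \<Longrightarrow> f x = 0" for x using R(2)[of x] R'(2)[of x] unfolding f_def M_def by auto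
  have "integral\<^sup>L lborel (\<lambda>x. indicator {-M..M} x *\<^sub>R f x) = E M * h M - E (-M) * h (-M)"
    by (rule integral_FTC_atLeastAtMost)
       (use R' R dF in \<open>auto simp: M_def intro: has_vector_derivative_at_within continuous_on_subset[OF fc]\<close>)
  also have "\<dots> = 0" using R(2)[of M] R(2)[of "-M"] unfolding M_def by auto
  finally have "integral\<^sup>L lborel f = 0" using cpt_eq_ind[of M f, OF fz] by simp
  moreover have "integral\<^sup>L lborel f = FT h' t + \<i> * of_real t * FT h t"
    unfolding f_def FT_def E_def using bump1_int[OF assms(1)] bump1_int[OF assms(2)] by simp
  ultimately show ?thesis by (simp add: algebra_simps) (metis add.commute add_eq_0_iff)
qed

lemma FT_bound: "norm (FT h t) \<le> (LINT x|lborel. norm (h x))"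
proof -
  have "norm (FT h t) \<le> (LINT x|lborel. norm (exp (\<i> * complex_of_real (t * x)) * h x))"
    unfolding FT_def by (rule integral_norm_bound)
  also have "\<dots> = (LINT x|lborel. norm (h x))" by (simp add: norm_mult)
  finally show ?thesis .
qed

lemma FT_meas:
  assumes "continuous_on UNIV h"
  shows "FT h \<in> borel_measurable lborel"
proof -
  have [measurable]: "h \<in> borel_measurable borel" using assms by (rule borel_measurable_continuous_onI)
  show ?thesis unfolding FT_def by measurable
qed


definition J :: "(real \<Rightarrow> complex) \<Rightarrow> real \<Rightarrow> complex" where
  "J h a = (LINT t|lborel. exp (- \<i> * complex_of_real t * complex_of_real a) * FT h t)"

lemma integrable_inv_sq: "integrable lborel (\<lambda>x::real. inverse (1 + x^2))"
  using integrable_inverse_1_plus_square by (simp add: set_integrable_def)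

lemma FT_integrable:
  assumes "bump1 h"
  shows "integrable lborel (FT h)"
proof -
  obtain R where R: "R > 0" "\<And>x. R \<le> \<bar>x\<bar> \<Longrightarrow> h x = 0" using bump1_R[OF assms] by blast
  obtain h' where h': "bump1 h'" "\<And>x. (h has_vector_derivative h' x) (at x)" "\<And>x. R + 1 \<le> \<bar>x\<bar> \<Longrightarrow> h' x = 0"
    using bump1_deriv[OF assms R] by blast
  obtain h'' where h'': "bump1 h''" "\<And>x. (h' has_vector_derivative h'' x) (at x)"
  proof -
    have "R + 1 > 0" using R by simp
    from bump1_deriv[OF h'(1) this h'(3)] show ?thesis using that by blast
  qed
  define C where "C = (LINT x|lborel. norm (h x)) + (LINT x|lborel. norm (h'' x))"
  have b: "norm (FT h t) \<le> C * inverse (1 + t^2)" for t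
  proof -
    have "FT h'' t = - complex_of_real (t^2) * FT h t"
      using FT_deriv[OF h'(1) h''(1) h''(2), of t] FT_deriv[OF assms h'(1) h'(2), of t]
      by (simp add: power2_eq_square algebra_simps)
    then have "t^2 * norm (FT h t) = norm (FT h'' t)" by (simp add: norm_mult norm_power)
    also have "\<dots> \<le> (LINT x|lborel. norm (h'' x))" by (rule FT_bound)
    finally have "norm (FT h t) + t^2 * norm (FT h t) \<le> C" using FT_bound[of h t] unfolding C_def by linarith
    then have "norm (FT h t) * (1 + t^2) \<le> C" by (simp add: algebra_simps)
    then show ?thesis by (simp add: field_simps add_pos_nonneg)
  qed
  show ?thesis
  proof (rule Bochner_Integration.integrable_bound)
    show "integrable lborel (\<lambda>t. C * inverse (1 + t^2))" using integrable_inv_sq by simp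
    show "FT h \<in> borel_measurable lborel" by (rule FT_meas[OF bump1_cont[OF assms]])
    show "AE x in lborel. norm (FT h x) \<le> norm (C * inverse (1 + x^2))"
    proof (rule AE_I2)
      fix x
      have "C \<ge> 0" unfolding C_def by (simp add: integral_nonneg_AE)
      then show "norm (FT h x) \<le> norm (C * inverse (1 + x^2))" using b[of x] by (simp add: add_pos_nonneg)
    qed
  qed
qed

lemma bump1_trans: "bump1 h \<Longrightarrow> bump1 (\<lambda>x. h (x - \<mu>))"
  unfolding bump1_def
proof (elim conjE exE, intro conjI smooth1_trans)
  fix R assume R: "\<forall>x. R \<le> \<bar>x\<bar> \<longrightarrow> h x = 0"
  show "\<exists>R. \<forall>x. R \<le> \<bar>x\<bar> \<longrightarrow> h (x - \<mu>) = 0"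
    by (rule exI[of _ "R + \<bar>\<mu>\<bar>"]) (use R in auto)
qed

lemma bump1_mod: "bump1 h \<Longrightarrow> bump1 (\<lambda>x. exp (\<i> * complex_of_real (\<xi> * x)) * h x)"
  unfolding bump1_def using smooth1_mod by auto

lemma FT_trans: "FT (\<lambda>x. h (x - \<mu>)) t = exp (\<i> * complex_of_real (t * \<mu>)) * FT h t"
proof -
  have "FT (\<lambda>x. h (x - \<mu>)) t = (LINT x|lborel. exp (\<i> * complex_of_real (t * (\<mu> + 1 * x))) * h (\<mu> + 1 * x - \<mu>))"
    unfolding FT_def by (subst lborel_integral_real_affine[where c=1 and t=\<mu>]) simp_all
  also have "\<dots> = (LINT x|lborel. exp (\<i> * complex_of_real (t * \<mu>)) * (exp (\<i> * complex_of_real (t * x)) * h x))"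
    by (simp add: algebra_simps exp_add[symmetric])
  also have "\<dots> = exp (\<i> * complex_of_real (t * \<mu>)) * FT h t"
    unfolding FT_def by simp
  finally show ?thesis .
qed

lemma FT_mod: "FT (\<lambda>x. exp (\<i> * complex_of_real (\<xi> * x)) * h x) t = FT h (t + \<xi>)"
  unfolding FT_def by (simp add: algebra_simps exp_add[symmetric])

lemma J_trans: "J (\<lambda>x. h (x - \<mu>)) a = J h (a - \<mu>)"
  unfolding J_def FT_trans by (simp add: algebra_simps exp_add[symmetric] exp_diff)

lemma J_mod: "J (\<lambda>x. exp (\<i> * complex_of_real (\<xi> * x)) * h x) a = exp (\<i> * complex_of_real (\<xi> * a)) * J h a"
proof -
  have "J (\<lambda>x. exp (\<i> * complex_of_real (\<xi> * x)) * h x) a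
     = (LINT t|lborel. exp (- \<i> * complex_of_real (-\<xi> + 1 * t) * complex_of_real a) * FT h (-\<xi> + 1 * t + \<xi>))"
    unfolding J_def FT_mod by (subst lborel_integral_real_affine[where c=1 and t="-\<xi>"]) simp_all
  also have "\<dots> = (LINT t|lborel. exp (\<i> * complex_of_real (\<xi> * a)) * (exp (- \<i> * complex_of_real t * complex_of_real a) * FT h t))"
    by (simp add: algebra_simps exp_add[symmetric])
  also have "\<dots> = exp (\<i> * complex_of_real (\<xi> * a)) * J h a" unfolding J_def by simp
  finally show ?thesis .
qed


lemma fub:
  fixes f :: "real \<Rightarrow> real \<Rightarrow> complex" and a b :: "real \<Rightarrow> real"
  assumes meas: "(\<lambda>(x, y). f x y) \<in> borel_measurable (lborel \<Otimes>\<^sub>M lborel)"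
    and ia: "integrable lborel a" and ib: "integrable lborel b"
    and bnd: "\<And>x y. norm (f x y) \<le> a x * b y"
  shows "(LINT x|lborel. LINT y|lborel. f x y) = (LINT y|lborel. LINT x|lborel. f x y)"
proof -
  have [measurable]: "a \<in> borel_measurable borel" "b \<in> borel_measurable borel"
    using ia ib by auto
  have int2: "integrable lborel (\<lambda>y. f x y)" for x
  proof (rule Bochner_Integration.integrable_bound)
    show "integrable lborel (\<lambda>y. a x * b y)" using ib by simp
    show "(\<lambda>y. f x y) \<in> borel_measurable lborel" using meas by measurable
    show "AE y in lborel. norm (f x y) \<le> norm (a x * b y)"
      using bnd by (auto intro!: AE_I2 order_trans[OF _ abs_ge_self])
  qed
  have "integrable (lborel \<Otimes>\<^sub>M lborel) (\<lambda>(x, y). f x y)"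
  proof (rule lborel_pair.Fubini_integrable)
    show "(\<lambda>(x, y). f x y) \<in> borel_measurable (lborel \<Otimes>\<^sub>M lborel)" by (rule meas)
    show "integrable lborel (\<lambda>x. LINT y|lborel. norm (case (x, y) of (x, y) \<Rightarrow> f x y))"
    proof (rule Bochner_Integration.integrable_bound)
      show "integrable lborel (\<lambda>x. a x * (LINT y|lborel. b y))" using ia by simp
      show "(\<lambda>x. LINT y|lborel. norm (case (x, y) of (x, y) \<Rightarrow> f x y)) \<in> borel_measurable lborel"
        using meas by measurable
      show "AE x in lborel. norm (LINT y|lborel. norm (case (x, y) of (x, y) \<Rightarrow> f x y)) \<le> norm (a x * (LINT y|lborel. b y))"
      proof (rule AE_I2)
        fix x
        have "(LINT y|lborel. norm (f x y)) \<le> (LINT y|lborel. a x * b y)"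
          by (rule integral_mono[OF integrable_norm[OF int2]]) (use ib bnd in auto)
        moreover have "0 \<le> (LINT y|lborel. norm (f x y))" by simp
        ultimately show "norm (LINT y|lborel. norm (case (x, y) of (x, y) \<Rightarrow> f x y)) \<le> norm (a x * (LINT y|lborel. b y))"
          by simp
      qed
    qed
    show "AE x in lborel. integrable lborel (\<lambda>y. case (x, y) of (x, y) \<Rightarrow> f x y)" using int2 by simp
  qed
  then show ?thesis by (rule lborel_pair.Fubini_integral[symmetric])
qed

lemma gauss_ft: "(LINT s|lborel. complex_of_real (exp (- (s^2) / 2)) * exp (\<i> * complex_of_real (x * s))) = complex_of_real (sqrt (2*pi) * exp (- (x^2) / 2))"
proof -
  have "char std_normal_distribution x = complex_of_real (exp (- (x^2) / 2))"
    by (simp add: char_std_normal_distribution)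
  then have "(LINT s|lborel. std_normal_density s *\<^sub>R exp (\<i> * complex_of_real (x * s))) = complex_of_real (exp (- (x^2) / 2))"
    unfolding char_def by (subst (asm) integral_density) (auto simp: normal_density_nonneg)
  moreover have "(\<lambda>s. complex_of_real (exp (- (s^2) / 2)) * exp (\<i> * complex_of_real (x * s)))
      = (\<lambda>s. complex_of_real (sqrt (2*pi)) * (std_normal_density s *\<^sub>R exp (\<i> * complex_of_real (x * s))))"
    by (rule ext) (simp add: std_normal_density_def scaleR_conv_of_real)
  ultimately show ?thesis by (simp only: integral_mult_right_zero) simp
qed


lemma eb_cont: "continuous_on UNIV (eb m)"
  by (metis DERIV_isCont continuous_at_imp_continuous_on eb_deriv)

lemma eb_le1: "eb 0 t \<le> 1"
  unfolding eb_def by auto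

lemma bump1_h0: "bump1 h0"
  unfolding bump1_def using smooth1_h0 by (auto simp: h0_def eb_def intro!: exI[of _ 1])

lemma J_h0_nz: "\<exists>l. J h0 l \<noteq> 0"
proof (rule ccontr)
  assume "\<not> (\<exists>l. J h0 l \<noteq> 0)"
  then have J0: "J h0 l = 0" for l by auto
  define g where "g = std_normal_density"
  define e where "e t = exp (- (t^2) / 2)" for t :: real
  have ig: "integrable lborel g" unfolding g_def by simp
  have ie: "integrable lborel e"
  proof -
    have "integrable lborel (\<lambda>t. sqrt (2*pi) * std_normal_density t)" by simp
    moreover have "(\<lambda>t. sqrt (2*pi) * std_normal_density t) = e"
      by (rule ext) (simp add: e_def std_normal_density_def)
    ultimately show ?thesis by simp
  qed
  have g0: "g t \<ge> 0" for t unfolding g_def by (rule normal_density_nonneg)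
  have e0: "e t \<ge> 0" for t unfolding e_def by simp
  have hc: "continuous_on UNIV h0" using bump1_cont[OF bump1_h0] .
  have [measurable]: "h0 \<in> borel_measurable borel" by (rule borel_measurable_continuous_onI[OF hc])
  have [measurable]: "FT h0 \<in> borel_measurable borel" using FT_meas[OF hc] by simp
  have [measurable]: "g \<in> borel_measurable borel" "e \<in> borel_measurable borel"
    unfolding g_def e_def by auto
  have iFT: "integrable lborel (FT h0)" by (rule FT_integrable[OF bump1_h0])
  have ih: "integrable lborel h0"
    by (rule cpt_integrable[OF hc, of 1]) (auto simp: h0_def eb_def)
  have charg: "(LINT l|lborel. complex_of_real (g l) * exp (- \<i> * complex_of_real t * complex_of_real l)) = complex_of_real (e t)" for t
  proof -
    have "char std_normal_distribution (-t) = complex_of_real (e t)"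
      by (simp add: char_std_normal_distribution e_def)
    then show ?thesis unfolding char_def g_def
      by (subst (asm) integral_density) (auto simp: normal_density_nonneg scaleR_conv_of_real mult_ac)
  qed
  have "0 = (LINT l|lborel. complex_of_real (g l) * J h0 l)" by (simp add: J0)
  also have "\<dots> = (LINT l|lborel. LINT t|lborel. complex_of_real (g l) * (exp (- \<i> * complex_of_real t * complex_of_real l) * FT h0 t))"
    unfolding J_def by (simp only: integral_mult_right_zero)
  also have "\<dots> = (LINT t|lborel. LINT l|lborel. complex_of_real (g l) * (exp (- \<i> * complex_of_real t * complex_of_real l) * FT h0 t))"
    by (rule fub[where a=g and b="\<lambda>t. norm (FT h0 t)"]) (use ig iFT g0 in \<open>auto simp: norm_mult\<close>)
  also have "\<dots> = (LINT t|lborel. FT h0 t * complex_of_real (e t))"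
  proof (rule Bochner_Integration.integral_cong[OF refl])
    fix t
    have "(LINT l|lborel. complex_of_real (g l) * (exp (- \<i> * complex_of_real t * complex_of_real l) * FT h0 t))
       = (LINT l|lborel. complex_of_real (g l) * exp (- \<i> * complex_of_real t * complex_of_real l)) * FT h0 t"
      by (simp only: integral_mult_left_zero[symmetric] mult.assoc)
    then show "(LINT l|lborel. complex_of_real (g l) * (exp (- \<i> * complex_of_real t * complex_of_real l) * FT h0 t)) = FT h0 t * complex_of_real (e t)"
      unfolding charg by (simp add: mult.commute)
  qed
  also have "\<dots> = (LINT t|lborel. LINT x|lborel. complex_of_real (e t) * (exp (\<i> * complex_of_real (t * x)) * h0 x))"
    unfolding FT_def by (simp only: integral_mult_right_zero mult.commute)
  also have "\<dots> = (LINT x|lborel. LINT t|lborel. complex_of_real (e t) * (exp (\<i> * complex_of_real (t * x)) * h0 x))"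
    by (rule fub[where a=e and b="\<lambda>x. norm (h0 x)"]) (use ie ih e0 in \<open>auto simp: norm_mult\<close>)
  also have "\<dots> = (LINT x|lborel. complex_of_real (eb 0 x * (sqrt (2*pi) * exp (- (x^2) / 2))))"
  proof (rule Bochner_Integration.integral_cong[OF refl])
    fix x
    have "(LINT t|lborel. complex_of_real (e t) * (exp (\<i> * complex_of_real (t * x)) * h0 x))
      = (LINT t|lborel. complex_of_real (exp (- (t^2) / 2)) * exp (\<i> * complex_of_real (x * t))) * h0 x"
      by (simp only: integral_mult_left_zero[symmetric] mult.assoc e_def) (simp add: mult_ac)
    then show "(LINT t|lborel. complex_of_real (e t) * (exp (\<i> * complex_of_real (t * x)) * h0 x)) =
      complex_of_real (eb 0 x * (sqrt (2*pi) * exp (- (x^2) / 2)))"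
      unfolding gauss_ft by (simp add: h0_def)
  qed
  also have "\<dots> = complex_of_real (LINT x|lborel. eb 0 x * (sqrt (2*pi) * exp (- (x^2) / 2)))"
    by (rule integral_complex_of_real)
  finally have I0: "(LINT x|lborel. eb 0 x * (sqrt (2*pi) * exp (- (x^2) / 2))) = 0" by simp
  define F where "F x = eb 0 x * (sqrt (2*pi) * exp (- (x^2) / 2))" for x
  have [measurable]: "eb 0 \<in> borel_measurable borel" by (rule borel_measurable_continuous_onI[OF eb_cont])
  have iF: "integrable lborel F"
  proof (rule Bochner_Integration.integrable_bound)
    show "integrable lborel (\<lambda>x. sqrt (2*pi) * e x)" using ie by simp
    show "F \<in> borel_measurable lborel" unfolding F_def by measurable
    show "AE x in lborel. norm (F x) \<le> norm (sqrt (2*pi) * e x)"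
    proof (rule AE_I2)
      fix x
      have "norm (F x) = eb 0 x * (sqrt (2*pi) * e x)" unfolding F_def e_def by (simp add: eb_nonneg)
      also have "\<dots> \<le> 1 * (sqrt (2*pi) * e x)" by (rule mult_right_mono[OF eb_le1]) (simp add: e0)
      finally show "norm (F x) \<le> norm (sqrt (2*pi) * e x)" using e0[of x] by simp
    qed
  qed
  have F0: "F x \<ge> 0" for x unfolding F_def by (simp add: eb_nonneg)
  have AE: "AE x in lborel. F x = 0"
    using integral_nonneg_eq_0_iff_AE[OF iF] I0 F0 unfolding F_def by auto
  have pos: "F x > 0" if "x \<in> {0<..<1}" for x
    using that eb_pos[of x 0] unfolding F_def by auto
  have "AE x in lborel. \<not> x \<in> {0<..<1::real}"
  proof (rule AE_mp[OF AE], rule AE_I2, intro impI)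
    fix x :: real assume "F x = 0" then show "\<not> x \<in> {0<..<1}" using pos[of x] by auto
  qed
  from emeasure_eq_0_AE[OF this] have "emeasure lborel {0<..<1::real} = 0"
    by (simp add: greaterThanLessThan_def greaterThan_def lessThan_def Collect_conj_eq[symmetric])
  then show False by simp
qed


lemma Basis_real2: "(Basis :: (real^2) set) = {axis 1 1, axis 2 1}"
  unfolding Basis_vec_def by (auto simp: UNIV_2)

lemma axis12_ne: "axis (1::2) (1::real) \<noteq> axis 2 1"
  by (simp add: axis_eq_axis)

lemma int_prod2:
  fixes f g :: "real \<Rightarrow> complex"
  assumes f: "integrable lborel f" and g: "integrable lborel g"
  shows "integrable lborel (\<lambda>x::real^2. f (x$1) * g (x$2))"
    "(LINT x|(lborel::(real^2) measure). f (x$1) * g (x$2)) = (LINT x|lborel. f x) * (LINT x|lborel. g x)"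
proof -
  interpret P: product_sigma_finite "\<lambda>_::real^2. lborel::real measure" by standard
  define FF where "FF b = (if b = axis 1 1 then f else g)" for b :: "real^2"
  define T where "T = (\<lambda>F::real^2 \<Rightarrow> real. \<Sum>b\<in>Basis. F b *\<^sub>R b)"
  have [measurable]: "f \<in> borel_measurable borel" "g \<in> borel_measurable borel" using f g by auto
  have Tm[measurable]: "T \<in> measurable (\<Pi>\<^sub>M b\<in>Basis. lborel) borel" unfolding T_def by measurable
  have T1: "T F $ 1 = F (axis 1 1)" "T F $ 2 = F (axis 2 1)" for F
    unfolding T_def Basis_real2 using axis12_ne by (auto simp: axis_def)
  have fm: "(\<lambda>x::real^2. f (x$1) * g (x$2)) \<in> borel_measurable borel" by measurable
  have eq: "(\<lambda>F. f (T F $ 1) * g (T F $ 2)) = (\<lambda>F. \<Prod>b\<in>Basis. FF b (F b))"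
    unfolding T1 Basis_real2 FF_def using axis12_ne by (auto simp: fun_eq_iff)
  have iP: "integrable (\<Pi>\<^sub>M b\<in>Basis. lborel) (\<lambda>F. \<Prod>b\<in>Basis. FF b (F b))"
    by (rule P.product_integrable_prod) (auto simp: FF_def f g)
  show "integrable lborel (\<lambda>x::real^2. f (x$1) * g (x$2))"
    unfolding lborel_eq[where 'a="real^2"] T_def[symmetric]
    by (subst integrable_distr_eq[OF Tm fm]) (simp add: eq iP)
  have "(LINT x|(lborel::(real^2) measure). f (x$1) * g (x$2)) = integral\<^sup>L (\<Pi>\<^sub>M b\<in>Basis. lborel) (\<lambda>F. \<Prod>b\<in>Basis. FF b (F b))"
    unfolding lborel_eq[where 'a="real^2"] T_def[symmetric]
    by (subst integral_distr[OF Tm fm]) (simp add: eq)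
  also have "\<dots> = (\<Prod>b\<in>Basis. integral\<^sup>L lborel (FF b))"
    by (rule P.product_integral_prod) (auto simp: FF_def f g)
  also have "\<dots> = (LINT x|lborel. f x) * (LINT x|lborel. g x)"
    unfolding Basis_real2 FF_def using axis12_ne by simp
  finally show "(LINT x|(lborel::(real^2) measure). f (x$1) * g (x$2)) = (LINT x|lborel. f x) * (LINT x|lborel. g x)" .
qed


lemma test_prod:
  assumes "bump1 h" "bump1 q"
  shows "test_function (\<lambda>x::real^2. h (x$1) * q (x$2))"
proof -
  obtain R where R: "R > 0" "\<And>x. R \<le> \<bar>x\<bar> \<Longrightarrow> h x = 0" using bump1_R[OF assms(1)] by blast
  obtain R' where R': "R' > 0" "\<And>x. R' \<le> \<bar>x\<bar> \<Longrightarrow> q x = 0" using bump1_R[OF assms(2)] by blast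
  have sm: "smooth_fun (\<lambda>x::real^2. h (x$1) * q (x$2))"
    unfolding smooth_fun_def using prod_Ck assms unfolding bump1_def by blast
  have "h (x$1) * q (x$2) = 0" if "R + R' < norm x" for x :: "real^2"
  proof (rule ccontr)
    assume "h (x$1) * q (x$2) \<noteq> 0"
    then have "\<bar>x$1\<bar> < R" "\<bar>x$2\<bar> < R'" using R(2) R'(2) by (auto simp: not_le[symmetric])
    moreover have "norm x \<le> \<bar>x$1\<bar> + \<bar>x$2\<bar>"
      using norm_le_l1_cart[of x] by (simp add: sum_2)
    ultimately show False using that by linarith
  qed
  then show ?thesis unfolding test_function_def using sm by blast
qed

lemma trace_expand:
  fixes P1 P2 Q1 Q2 \<rho> :: "complex^2^2"
  shows "trace ((mat_scale u1 P1 + mat_scale u2 P2) ** (mat_scale v1 Q1 + mat_scale v2 Q2) ** \<rho>)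
    = u1 * v1 * trace (P1 ** Q1 ** \<rho>) + u1 * v2 * trace (P1 ** Q2 ** \<rho>)
    + u2 * v1 * trace (P2 ** Q1 ** \<rho>) + u2 * v2 * trace (P2 ** Q2 ** \<rho>)"
  by (simp add: mm_add_r matrix_add_ldistrib ms_mult_left ms_mult_right trace_add trace_ms ms_ms algebra_simps)

definition ee :: "real \<Rightarrow> real \<Rightarrow> complex" where
  "ee t a = exp (- \<i> * complex_of_real t * complex_of_real a)"

lemma KD_char_formula:
  fixes A B P1 P2 Q1 Q2 \<rho> :: "complex^2^2"
  assumes "A ** P1 = mat_scale (of_real a1) P1" "A ** P2 = mat_scale (of_real a2) P2" "P1 + P2 = mat 1"
    and "B ** Q1 = mat_scale (of_real b1) Q1" "B ** Q2 = mat_scale (of_real b2) Q2" "Q1 + Q2 = mat 1"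
  shows "KD_char A B \<rho> s =
      ee (s$1) a1 * ee (s$2) b1 * trace (P1 ** Q1 ** \<rho>) + ee (s$1) a1 * ee (s$2) b2 * trace (P1 ** Q2 ** \<rho>)
    + ee (s$1) a2 * ee (s$2) b1 * trace (P2 ** Q1 ** \<rho>) + ee (s$1) a2 * ee (s$2) b2 * trace (P2 ** Q2 ** \<rho>)"
  unfolding KD_char_def mat_exp_eig[OF assms(1-3)] mat_exp_eig[OF assms(4-6)] trace_expand ee_def
  by (simp add: mult.assoc)


lemma norm_ee: "norm (ee t a) = 1"
proof -
  have "ee t a = exp (\<i> * complex_of_real (- t * a))" unfolding ee_def by (simp add: algebra_simps)
  then show ?thesis by (simp only: norm_exp_i_times)
qed

lemma ee_FT_int:
  assumes "bump1 h" shows "integrable lborel (\<lambda>t. ee t a * FT h t)"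
proof (rule Bochner_Integration.integrable_bound)
  show "integrable lborel (FT h)" by (rule FT_integrable[OF assms])
  have [measurable]: "FT h \<in> borel_measurable borel" using FT_meas[OF bump1_cont[OF assms]] by simp
  show "(\<lambda>t. ee t a * FT h t) \<in> borel_measurable lborel" unfolding ee_def by measurable
  show "AE x in lborel. norm (ee x a * FT h x) \<le> norm (FT h x)"
    by (rule AE_I2) (simp add: norm_mult norm_ee)
qed

lemma J_ee: "J h a = (LINT t|lborel. ee t a * FT h t)"
  unfolding J_def ee_def ..

lemma inner2: "(s::real^2) \<bullet> x = s$1 * x$1 + s$2 * x$2"
  by (simp add: inner_vec_def sum_2)

lemma KD_dist_formula:
  fixes A B P1 P2 Q1 Q2 \<rho> :: "complex^2^2"
  assumes "A ** P1 = mat_scale (of_real a1) P1" "A ** P2 = mat_scale (of_real a2) P2" "P1 + P2 = mat 1"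
    and "B ** Q1 = mat_scale (of_real b1) Q1" "B ** Q2 = mat_scale (of_real b2) Q2" "Q1 + Q2 = mat 1"
    and h: "bump1 h" and q: "bump1 q"
  shows "KD_dist A B \<rho> (\<lambda>x. h (x$1) * q (x$2)) = complex_of_real (1 / (2 * pi)^2) *
     (J h a1 * J q b1 * trace (P1 ** Q1 ** \<rho>) + J h a1 * J q b2 * trace (P1 ** Q2 ** \<rho>)
    + J h a2 * J q b1 * trace (P2 ** Q1 ** \<rho>) + J h a2 * J q b2 * trace (P2 ** Q2 ** \<rho>))"
proof -
  have inner: "(LINT x|lborel. exp (\<i> * complex_of_real (s \<bullet> x)) * (h (x$1) * q (x$2))) = FT h (s$1) * FT q (s$2)" for s :: "real^2"
  proof -
    have "(\<lambda>x::real^2. exp (\<i> * complex_of_real (s \<bullet> x)) * (h (x$1) * q (x$2)))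
      = (\<lambda>x. (exp (\<i> * complex_of_real (s$1 * x$1)) * h (x$1)) * (exp (\<i> * complex_of_real (s$2 * x$2)) * q (x$2)))"
      by (rule ext) (simp add: inner2 algebra_simps exp_add[symmetric])
    then show ?thesis unfolding FT_def using int_prod2(2)[OF bump1_int[OF h] bump1_int[OF q]] by simp
  qed
  define T where "T a b s = (ee (s$1) a * FT h (s$1)) * (ee (s$2) b * FT q (s$2))" for a b and s :: "real^2"
  have iT: "integrable lborel (T a b)" for a b
    unfolding T_def using int_prod2(1)[OF ee_FT_int[OF h] ee_FT_int[OF q]] .
  have IT: "(LINT s|lborel. T a b s) = J h a * J q b" for a b
    unfolding T_def J_ee using int_prod2(2)[OF ee_FT_int[OF h] ee_FT_int[OF q]] .
  have "(\<lambda>s. KD_char A B \<rho> s * (LINT x|lborel. exp (\<i> * complex_of_real (s \<bullet> x)) * (h (x$1) * q (x$2))))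
    = (\<lambda>s. trace (P1 ** Q1 ** \<rho>) * T a1 b1 s + trace (P1 ** Q2 ** \<rho>) * T a1 b2 s
         + trace (P2 ** Q1 ** \<rho>) * T a2 b1 s + trace (P2 ** Q2 ** \<rho>) * T a2 b2 s)"
    unfolding inner KD_char_formula[OF assms(1-6)] T_def by (rule ext) (simp add: algebra_simps)
  then show ?thesis unfolding KD_dist_def
    using iT IT by (simp add: algebra_simps)
qed


definition EM :: "real \<Rightarrow> real \<Rightarrow> real \<Rightarrow> complex" where
  "EM \<xi> \<mu> = (\<lambda>x. exp (\<i> * complex_of_real (\<xi> * x)) * h0 (x - \<mu>))"

lemma bump1_EM: "bump1 (EM \<xi> \<mu>)"
  unfolding EM_def by (intro bump1_mod bump1_trans bump1_h0)

lemma J_EM: "J (EM \<xi> \<mu>) a = exp (\<i> * complex_of_real (\<xi> * a)) * J h0 (a - \<mu>)"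
  unfolding EM_def J_mod J_trans ..

lemma lin1:
  fixes a1 a2 :: real and x1 x2 :: complex
  assumes "a1 \<noteq> a2"
    and H: "\<And>\<xi> \<mu>. x1 * J (EM \<xi> \<mu>) a1 + x2 * J (EM \<xi> \<mu>) a2 = 0"
  shows "x1 = 0"
proof -
  obtain l where l: "J h0 l \<noteq> 0" using J_h0_nz by blast
  define K where "K = J h0 (a2 - (a1 - l))"
  have e0: "x1 * J h0 l + x2 * K = 0"
    using H[of 0 "a1 - l"] unfolding J_EM K_def by simp
  define \<xi> where "\<xi> = pi / (a1 - a2)"
  have "\<xi> * a1 = \<xi> * a2 + pi" unfolding \<xi>_def using assms(1) by (simp add: field_simps)
  then have ex: "exp (\<i> * complex_of_real (\<xi> * a1)) = - exp (\<i> * complex_of_real (\<xi> * a2))"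
    by (simp add: distrib_left exp_add)
  have "exp (\<i> * complex_of_real (\<xi> * a2)) * (- x1 * J h0 l + x2 * K) = 0"
    using H[of \<xi> "a1 - l"] unfolding J_EM K_def ex by (simp add: algebra_simps)
  then have e1: "- x1 * J h0 l + x2 * K = 0" by simp
  from e0 e1 have "2 * x1 * J h0 l = 0" by (simp add: algebra_simps)
  then show ?thesis using l by simp
qed

lemma lin2:
  fixes a1 a2 :: real and x1 x2 :: complex
  assumes "a1 \<noteq> a2"
    and H: "\<And>\<xi> \<mu>. x1 * J (EM \<xi> \<mu>) a1 + x2 * J (EM \<xi> \<mu>) a2 = 0"
  shows "x1 = 0 \<and> x2 = 0"
proof
  show "x1 = 0" by (rule lin1[OF assms])
  show "x2 = 0" by (rule lin1[of a2 a1 x2 x1]) (use assms in \<open>auto simp: add.commute\<close>)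
qed


theorem proposition5:
  fixes A B \<rho> \<rho>' :: "complex^2^2"
  assumes "hermitian_mat A" and "hermitian_mat B" and "A ** B \<noteq> B ** A"
    and "density_operator \<rho>" and "density_operator \<rho>'"
  shows "\<rho> = \<rho>' \<longleftrightarrow>
    (\<forall>\<phi>::real^2 \<Rightarrow> complex. test_function \<phi> \<longrightarrow> KD_dist A B \<rho> \<phi> = KD_dist A B \<rho>' \<phi>)"
proof
  assume "\<rho> = \<rho>'" then show "\<forall>\<phi>::real^2 \<Rightarrow> complex. test_function \<phi> \<longrightarrow> KD_dist A B \<rho> \<phi> = KD_dist A B \<rho>' \<phi>" by simp
next
  assume H: "\<forall>\<phi>::real^2 \<Rightarrow> complex. test_function \<phi> \<longrightarrow> KD_dist A B \<rho> \<phi> = KD_dist A B \<rho>' \<phi>"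
  obtain a1 a2 P1 P2 where sA: "a1 \<noteq> a2" "A ** P1 = mat_scale (of_real a1) P1"
    "A ** P2 = mat_scale (of_real a2) P2" "P1 + P2 = mat 1" "A = mat_scale (of_real a1) P1 + mat_scale (of_real a2) P2"
    using herm_spec[OF assms(1,3)] by blast
  have "B ** A \<noteq> A ** B" using assms(3) by metis
  then obtain b1 b2 Q1 Q2 where sB: "b1 \<noteq> b2" "B ** Q1 = mat_scale (of_real b1) Q1"
    "B ** Q2 = mat_scale (of_real b2) Q2" "Q1 + Q2 = mat 1" "B = mat_scale (of_real b1) Q1 + mat_scale (of_real b2) Q2"
    using herm_spec[OF assms(2)] by blast
  define d where "d X Y = trace (X ** Y ** \<rho>) - trace (X ** Y ** \<rho>')" for X Y :: "complex^2^2"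
  have main: "J h a1 * J q b1 * d P1 Q1 + J h a1 * J q b2 * d P1 Q2 + J h a2 * J q b1 * d P2 Q1 + J h a2 * J q b2 * d P2 Q2 = 0"
    if "bump1 h" "bump1 q" for h q
  proof -
    have "KD_dist A B \<rho> (\<lambda>x. h (x$1) * q (x$2)) = KD_dist A B \<rho>' (\<lambda>x. h (x$1) * q (x$2))"
      using H test_prod[OF that] by blast
    then have "complex_of_real (1 / (2 * pi)^2) * (J h a1 * J q b1 * d P1 Q1 + J h a1 * J q b2 * d P1 Q2 + J h a2 * J q b1 * d P2 Q1 + J h a2 * J q b2 * d P2 Q2) = 0"
      unfolding KD_dist_formula[OF sA(2-4) sB(2-4) that] d_def by (simp add: algebra_simps)
    then show ?thesis by simp
  qed
  have y0: "d P1 Q1 * J q b1 + d P1 Q2 * J q b2 = 0 \<and> d P2 Q1 * J q b1 + d P2 Q2 * J q b2 = 0" if "bump1 q" for q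
    by (rule lin2[OF sA(1)]) (use main[OF bump1_EM that] in \<open>simp add: algebra_simps\<close>)
  have z1: "d P1 Q1 = 0 \<and> d P1 Q2 = 0"
    by (rule lin2[OF sB(1)]) (use y0[OF bump1_EM] in simp)
  have z2: "d P2 Q1 = 0 \<and> d P2 Q2 = 0"
    by (rule lin2[OF sB(1)]) (use y0[OF bump1_EM] in simp)
  show "\<rho> = \<rho>'"
  proof (rule alg_final[OF assms sA(5,4) sB(5,4)])
    fix X Y assume "X \<in> {P1, P2}" "Y \<in> {Q1, Q2}"
    then show "trace (X ** Y ** \<rho>) = trace (X ** Y ** \<rho>')" using z1 z2 unfolding d_def by auto
  qed
qed


end
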